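(* For all positive integers $n$, \[ g(n)\le f_3(2n,4,3)\le 2\lceil\log n\rceil^2 g(n). \]
   Context: Logarithms are base 2. The grid graph $\Gamma_{n,n}$ has vertex set $[n]\times[n]$, distinct vertices $(i,j),(i',j')$ adjacent iff $i=i'$ or $j=j'$. A rectangle is the induced subgraph on $\{(i,j),(i',j),(i,j'),(i',j')\}$ with $i<i'$, $j<j'$; in an edge coloring it is alternating if $\{(i,j),(i',j)\}$ and $\{(i,j'),(i',j')\}$ share a color and $\{(i,j),(i,j')\}$ and $\{(i',j),(i',j')\}$ share a color. $g(n)$ is the minimum $r$ for which some edge coloring of $\Gamma_{n,n}$ with $r$ colors has no alternating rectangle. $f_3(N,4,3)$ is the minimum $r$ for which there is a coloring of the triples of an $N$-element set (the edges of $K_N^{(3)}$) with $r$ colors such that every set of $4$ vertices has at least $3$ distinct colors on its $4$ triples. *)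

theory Defs
  imports Complex_Main
begin

definition grid_vertices :: "nat \<Rightarrow> (nat \<times> nat) set" where
  "grid_vertices n = {1..n} \<times> {1..n}"

definition grid_edges :: "nat \<Rightarrow> (nat \<times> nat) set set" where
  "grid_edges n = {{u, v} | u v. u \<in> grid_vertices n \<and> v \<in> grid_vertices n \<and> u \<noteq> v
                     \<and> (fst u = fst v \<or> snd u = snd v)}"

definition has_alt_rect :: "nat \<Rightarrow> ((nat \<times> nat) set \<Rightarrow> nat) \<Rightarrow> bool" where
  "has_alt_rect n c \<longleftrightarrow> (\<exists>i i' j j'. 1 \<le> i \<and> i < i' \<and> i' \<le> n \<and> 1 \<le> j \<and> j < j' \<and> j' \<le> n \<and>
      c {(i,j),(i',j)} = c {(i,j'),(i',j')} \<and> c {(i,j),(i,j')} = c {(i',j),(i',j')})"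

definition g :: "nat \<Rightarrow> nat" where
  "g n = (LEAST r. \<exists>c. (\<forall>e\<in>grid_edges n. c e < r) \<and> \<not> has_alt_rect n c)"

definition f3_43 :: "nat \<Rightarrow> nat" where
  "f3_43 N = (LEAST r. \<exists>c :: nat set \<Rightarrow> nat.
      (\<forall>T. T \<subseteq> {0..<N} \<and> card T = 3 \<longrightarrow> c T < r) \<and>
      (\<forall>S. S \<subseteq> {0..<N} \<and> card S = 4 \<longrightarrow> card (c ` {T. T \<subseteq> S \<and> card T = 3}) \<ge> 3))"

end

theory Submission
  imports Defs
begin


lemma len3: "length xs = 3 \<Longrightarrow> \<exists>a b c. xs = [a,b,c]"
  by (auto simp: numeral_3_eq_3 length_Suc_conv)
lemma len4: "length xs = 4 \<Longrightarrow> \<exists>a b c d. xs = [a,b,c,d]"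
  by (auto simp: numeral_eq_Suc length_Suc_conv)

lemma sort3:
  fixes T :: "nat set" assumes "card T = 3"
  obtains p q r where "p < q" "q < r" "T = {p,q,r}"
proof -
  have fin: "finite T" using assms by (metis card.infinite zero_neq_numeral)
  let ?xs = "sorted_list_of_set T"
  have l: "length ?xs = 3" using assms by simp
  have s: "sorted_wrt (<) ?xs" by simp
  have st: "set ?xs = T" using fin by simp
  from len3[OF l] obtain a b c where "?xs = [a,b,c]" by blast
  with s st that show ?thesis by auto
qed

lemma sort4:
  fixes T :: "nat set" assumes "card T = 4"
  obtains p q r s where "p < q" "q < r" "r < s" "T = {p,q,r,s}"
proof -
  have fin: "finite T" using assms by (metis card.infinite zero_neq_numeral)
  let ?xs = "sorted_list_of_set T"
  have l: "length ?xs = 4" using assms by simp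
  have s: "sorted_wrt (<) ?xs" by simp
  have st: "set ?xs = T" using fin by simp
  from len4[OF l] obtain a b c d where "?xs = [a,b,c,d]" by blast
  with s st that show ?thesis by auto
qed

lemma three_le_card:
  assumes "a \<noteq> b" "a \<noteq> c" "b \<noteq> c" "{a,b,c} \<subseteq> X" "finite X"
  shows "3 \<le> card X"
proof -
  have "card {a,b,c} = 3" using assms by simp
  moreover have "card {a,b,c} \<le> card X" using assms card_mono by blast
  ultimately show ?thesis by simp
qed

lemma no_alt:
  assumes "\<not> has_alt_rect n \<chi>" "1\<le>i" "i\<le>n" "1\<le>i'" "i'\<le>n" "1\<le>j" "j\<le>n" "1\<le>j'" "j'\<le>n"
    "i\<noteq>i'" "j\<noteq>j'"
    "\<chi> {(i,j),(i',j)} = \<chi> {(i,j'),(i',j')}" "\<chi> {(i,j),(i,j')} = \<chi> {(i',j),(i',j')}"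
  shows False
proof -
  consider "i<i'" "j<j'" | "i'<i" "j<j'" | "i<i'" "j'<j" | "i'<i" "j'<j"
    using assms(10,11) by (meson linorder_neqE_nat)
  then show False
  proof cases
    case 1 then show ?thesis using assms unfolding has_alt_rect_def by blast
  next
    case 2 then show ?thesis using assms unfolding has_alt_rect_def
      apply - apply (erule notE) apply (rule exI[of _ i'], rule exI[of _ i], rule exI[of _ j], rule exI[of _ j'])
      by (simp add: insert_commute)
  next
    case 3 then show ?thesis using assms unfolding has_alt_rect_def
      apply - apply (erule notE) apply (rule exI[of _ i], rule exI[of _ i'], rule exI[of _ j'], rule exI[of _ j])
      by (simp add: insert_commute)
  next
    case 4 then show ?thesis using assms unfolding has_alt_rect_def
      apply - apply (erule notE) apply (rule exI[of _ i'], rule exI[of _ i], rule exI[of _ j'], rule exI[of _ j])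
      by (simp add: insert_commute)
  qed
qed

lemma g_exists: "\<exists>c. (\<forall>e\<in>grid_edges n. c e < Suc n) \<and> \<not> has_alt_rect n c"
proof (intro exI conjI)
  show "\<forall>e\<in>grid_edges n. Max (snd ` e) < Suc n"
  proof
    fix e assume "e \<in> grid_edges n"
    then obtain u v where e: "e = {u,v}" "u \<in> grid_vertices n" "v \<in> grid_vertices n"
      unfolding grid_edges_def by blast
    then have "snd u \<le> n" "snd v \<le> n" by (auto simp: grid_vertices_def)
    then show "Max (snd ` e) < Suc n" using e by simp
  qed
  show "\<not> has_alt_rect n (\<lambda>e. Max (snd ` e))"
  proof
    assume "has_alt_rect n (\<lambda>e. Max (snd ` e))"
    then show False unfolding has_alt_rect_def by (elim exE conjE) simp
  qed
qed


locale constr =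
  fixes n L :: nat
  assumes n1: "1 \<le> n" and nL: "n \<le> 2^L"
begin

definition hh :: "nat \<Rightarrow> nat" where
  "hh p = (if p < n then p else p - n + 2^L)"

definition agree :: "nat \<Rightarrow> nat \<Rightarrow> nat \<Rightarrow> bool" where
  "agree k p q \<longleftrightarrow> hh p div 2^k = hh q div 2^k"

definition dl :: "nat \<Rightarrow> nat \<Rightarrow> nat" where
  "dl p q = (LEAST k. agree (Suc k) p q)"

lemma hh_mono: "p < q \<Longrightarrow> q < 2*n \<Longrightarrow> hh p < hh q"
  using nL unfolding hh_def by auto

lemma hh_lt: "p < 2*n \<Longrightarrow> hh p < 2^Suc L"
  using nL unfolding hh_def by auto

lemma hh_le: "p \<le> q \<Longrightarrow> q < 2*n \<Longrightarrow> hh p \<le> hh q"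
  using hh_mono by (cases "p = q") (auto intro: less_imp_le)

lemma agree_mono: assumes "agree k p q" "k \<le> m" shows "agree m p q"
proof -
  have e: "(2::nat)^m = 2^k * 2^(m-k)" using assms(2) by (simp add: power_add[symmetric])
  show ?thesis using assms(1) unfolding agree_def e div_mult2_eq by simp
qed

lemma agree_top: "p < 2*n \<Longrightarrow> q < 2*n \<Longrightarrow> agree (Suc L) p q"
  unfolding agree_def using hh_lt by simp

lemma agree_0: "p < 2*n \<Longrightarrow> q < 2*n \<Longrightarrow> agree 0 p q \<longleftrightarrow> p = q"
  unfolding agree_def using hh_mono by (metis div_by_1 power_0 less_irrefl linorder_neqE_nat)

lemma dl_le: "p < 2*n \<Longrightarrow> q < 2*n \<Longrightarrow> dl p q \<le> L"
  unfolding dl_def using agree_top by (simp add: Least_le)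

lemma agree_iff: assumes "p \<noteq> q" "p < 2*n" "q < 2*n"
  shows "agree k p q \<longleftrightarrow> dl p q < k"
proof
  have ex: "agree (Suc (dl p q)) p q" unfolding dl_def
    by (rule LeastI[of _ L]) (use agree_top assms in auto)
  assume "dl p q < k" then show "agree k p q" using agree_mono[OF ex] by simp
next
  assume a: "agree k p q"
  show "dl p q < k"
  proof (rule ccontr)
    assume "\<not> dl p q < k"
    then have "k \<le> dl p q" by simp
    show False
    proof (cases k)
      case 0 then show False using a agree_0 assms by simp
    next
      case (Suc m)
      then have "m < dl p q" using \<open>k \<le> dl p q\<close> by simp
      then have "\<not> agree (Suc m) p q" unfolding dl_def by (rule not_less_Least)
      then show False using a Suc by simp
    qed
  qed
qed

lemma convex: assumes "p \<le> q" "q \<le> r" "r < 2*n" "agree k p r"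
  shows "agree k p q" "agree k q r"
proof -
  have "hh p div 2^k \<le> hh q div 2^k" "hh q div 2^k \<le> hh r div 2^k"
    using hh_le assms by (auto intro: div_le_mono)
  then show "agree k p q" "agree k q r" using assms(4) unfolding agree_def by auto
qed

lemma dl_max: assumes "p < q" "q < r" "r < 2*n"
  shows "dl p r = max (dl p q) (dl q r)"
proof -
  have A: "agree k p r \<longleftrightarrow> agree k p q \<and> agree k q r" for k
    using convex[of p q r k] assms unfolding agree_def by auto
  have B: "dl p r < k \<longleftrightarrow> dl p q < k \<and> dl q r < k" for k
    using A[of k] agree_iff[of p r k] agree_iff[of p q k] agree_iff[of q r k] assms by auto
  show ?thesis using B[of "Suc (dl p r)"] B[of "Suc (max (dl p q) (dl q r))"]
    by (simp add: less_Suc_eq_le) (meson le_antisym max.boundedE max.bounded_iff le_max_iff_disj)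
qed

lemma dl_neq: assumes "p < q" "q < r" "r < 2*n"
  shows "dl p q \<noteq> dl q r"
proof
  assume eq: "dl p q = dl q r"
  define k where "k = dl p q"
  have a1: "agree (Suc k) p q" "\<not> agree k p q" using agree_iff[of p q] assms k_def by auto
  have a2: "agree (Suc k) q r" "\<not> agree k q r" using agree_iff[of q r] assms k_def eq by auto
  define P where "P = hh p div 2^k"
  define Q where "Q = hh q div 2^k"
  define R where "R = hh r div 2^k"
  have le: "P \<le> Q" "Q \<le> R" unfolding P_def Q_def R_def using hh_le assms by (auto intro: div_le_mono)
  have ne: "P \<noteq> Q" "Q \<noteq> R" using a1 a2 unfolding agree_def P_def Q_def R_def by auto
  have s: "\<And>x::nat. x div 2^Suc k = (x div 2^k) div 2" by (simp only: power_Suc2 div_mult2_eq)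
  have d: "P div 2 = Q div 2" "Q div 2 = R div 2"
    using a1 a2 unfolding agree_def P_def Q_def R_def s by auto
  have "P < Q" "Q < R" using le ne by auto
  moreover have "P = 2*(P div 2) + P mod 2" "R = 2*(R div 2) + R mod 2" by simp_all
  moreover have "P mod 2 < 2" "R mod 2 < 2" by simp_all
  ultimately show False using d by linarith
qed

lemma same_half: assumes "p \<noteq> q" "p < 2*n" "q < 2*n" "dl p q < L"
  shows "p mod n \<noteq> q mod n"
proof -
  have "agree L p q" using agree_iff assms by simp
  have h: "hh x div 2^L = (if x < n then 0 else 1)" if "x < 2*n" for x
  proof (cases "x < n")
    case True then show ?thesis using nL by (simp add: hh_def)
  next
    case False
    define t where "t = x - n"
    then have "hh x = 2^L + t" "t < 2^L" using that nL False by (auto simp: hh_def)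
    then show ?thesis using False by (simp add: div_add_self1)
  qed
  have e: "(if p < n then 0 else 1::nat) = (if q < n then 0 else 1)"
    using \<open>agree L p q\<close> h[OF assms(2)] h[OF assms(3)] unfolding agree_def by simp
  have m: "x mod n = (if x < n then x else x - n)" if "x < 2*n" for x
  proof (cases "x < n")
    case True then show ?thesis by simp
  next
    case False
    then have "x mod n = (x - n) mod n" by (simp add: le_mod_geq)
    also have "\<dots> = x - n" using that False by simp
    finally show ?thesis using False by simp
  qed
  show ?thesis
  proof (cases "p < n")
    case True
    then have "q < n" using e by (cases "q < n") auto
    then show ?thesis using True m[OF assms(2)] m[OF assms(3)] assms(1) by simp
  next
    case False
    then have "\<not> q < n" using e by (cases "q < n") auto
    then show ?thesis using False m[OF assms(2)] m[OF assms(3)] assms(1) by simp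
  qed
qed

end


locale constr2 = constr +
  fixes R :: nat and \<chi> :: "(nat \<times> nat) set \<Rightarrow> nat"
  assumes chi_bound: "\<forall>e\<in>grid_edges n. \<chi> e < R" and noalt: "\<not> has_alt_rect n \<chi>"
begin

definition rho :: "nat \<Rightarrow> nat" where "rho p = p mod n + 1"
definition idx :: "nat \<Rightarrow> nat \<Rightarrow> nat" where "idx a b = a*L + (if b < a then b else b - 1)"
definition chipart :: "nat \<Rightarrow> nat \<Rightarrow> nat \<Rightarrow> nat" where
  "chipart p q r = (if dl p q < dl q r then \<chi> {(rho p, rho r),(rho q, rho r)}
                    else \<chi> {(rho p, rho q),(rho p, rho r)})"
definition col :: "nat \<Rightarrow> nat \<Rightarrow> nat \<Rightarrow> nat" where
  "col p q r = idx (dl p q) (dl q r) * R + chipart p q r"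
definition cT :: "nat set \<Rightarrow> nat" where
  "cT T = col (Min T) (Min (T - {Min T})) (Max T)"

lemma rho_range: "1 \<le> rho p" "rho p \<le> n"
  using n1 unfolding rho_def by (auto simp: Suc_le_eq)

lemma rho_neq: "p \<noteq> q \<Longrightarrow> p < 2*n \<Longrightarrow> q < 2*n \<Longrightarrow> dl p q < L \<Longrightarrow> rho p \<noteq> rho q"
  using same_half unfolding rho_def by simp

lemma col_edge: "1\<le>i \<Longrightarrow> i\<le>n \<Longrightarrow> 1\<le>i' \<Longrightarrow> i'\<le>n \<Longrightarrow> 1\<le>j \<Longrightarrow> j\<le>n \<Longrightarrow> i\<noteq>i'
   \<Longrightarrow> {(i,j),(i',j)} \<in> grid_edges n"
  unfolding grid_edges_def grid_vertices_def
  by (rule CollectI, rule exI[of _ "(i,j)"], rule exI[of _ "(i',j)"]) simp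

lemma row_edge: "1\<le>i \<Longrightarrow> i\<le>n \<Longrightarrow> 1\<le>j \<Longrightarrow> j\<le>n \<Longrightarrow> 1\<le>j' \<Longrightarrow> j'\<le>n \<Longrightarrow> j\<noteq>j'
   \<Longrightarrow> {(i,j),(i,j')} \<in> grid_edges n"
  unfolding grid_edges_def grid_vertices_def
  by (rule CollectI, rule exI[of _ "(i,j)"], rule exI[of _ "(i,j')"]) simp

lemma chipart_lt: assumes "p < q" "q < r" "r < 2*n" shows "chipart p q r < R"
proof -
  have ne: "dl p q \<noteq> dl q r" using dl_neq assms by blast
  have le: "dl p q \<le> L" "dl q r \<le> L" using dl_le assms by auto
  show ?thesis
  proof (cases "dl p q < dl q r")
    case True
    then have "rho p \<noteq> rho q" using rho_neq[of p q] assms le by simp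
    then have "{(rho p, rho r),(rho q, rho r)} \<in> grid_edges n" using col_edge rho_range by blast
    then show ?thesis using True chi_bound unfolding chipart_def by simp
  next
    case False
    then have "dl q r < L" using ne le by simp
    then have "rho q \<noteq> rho r" using rho_neq[of q r] assms by simp
    then have "{(rho p, rho q),(rho p, rho r)} \<in> grid_edges n" using row_edge rho_range by blast
    then show ?thesis using False chi_bound unfolding chipart_def by simp
  qed
qed

lemma sidx_lt: "a \<le> L \<Longrightarrow> b \<le> L \<Longrightarrow> a \<noteq> b \<Longrightarrow> (if b < a then b else b - 1) < L"
  by auto

lemma idx_lt: assumes "a \<le> L" "b \<le> L" "a \<noteq> b" shows "Suc (idx a b) \<le> (L+1)*L"
proof -
  define s where "s = (if b < a then b else b - 1)"
  have "a*L \<le> L*L" using assms(1) by simp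
  moreover have "s < L" using sidx_lt[OF assms] s_def by simp
  ultimately have "Suc (a*L + s) \<le> L*L + L" by linarith
  then have "Suc (a*L + s) \<le> (L+1)*L" by (simp add: algebra_simps)
  then show ?thesis unfolding idx_def s_def .
qed

lemma divmod_uniq: fixes a s a' s' :: nat
  assumes "s < L" "s' < L" "a*L + s = a'*L + s'" shows "a = a' \<and> s = s'"
proof -
  have "(s + a*L) div L = a" "(s' + a'*L) div L = a'" using assms by simp_all
  moreover have "(s + a*L) mod L = s" "(s' + a'*L) mod L = s'" using assms by simp_all
  ultimately show ?thesis using assms(3) by (metis add.commute)
qed

lemma idx_inj: assumes "a \<le> L" "b \<le> L" "a \<noteq> b" "a' \<le> L" "b' \<le> L" "a' \<noteq> b'"
  "idx a b = idx a' b'" shows "a = a' \<and> b = b'"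
proof -
  have "a = a' \<and> (if b < a then b else b - 1) = (if b' < a' then b' else b' - 1)"
    using divmod_uniq[OF sidx_lt[OF assms(1-3)] sidx_lt[OF assms(4-6)]] assms(7)
    unfolding idx_def by blast
  then show ?thesis using assms by (auto split: if_splits)
qed

lemma col_lt: assumes "p < q" "q < r" "r < 2*n" shows "col p q r < (L+1)*L*R"
proof -
  have ne: "dl p q \<noteq> dl q r" using dl_neq assms by blast
  have le: "dl p q \<le> L" "dl q r \<le> L" using dl_le assms by auto
  have "col p q r < idx (dl p q) (dl q r) * R + R"
    unfolding col_def using chipart_lt[OF assms] by simp
  also have "\<dots> = Suc (idx (dl p q) (dl q r)) * R" by simp
  also have "\<dots> \<le> (L+1)*L*R" using idx_lt[OF le ne] by (rule mult_le_mono1)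
  finally show ?thesis .
qed

lemma col_pat: assumes "p < q" "q < r" "r < 2*n" "p' < q'" "q' < r'" "r' < 2*n"
  "col p q r = col p' q' r'" shows "dl p q = dl p' q' \<and> dl q r = dl q' r'"
proof -
  have c1: "chipart p q r < R" and c2: "chipart p' q' r' < R" using chipart_lt assms by blast+
  have "col p q r div R = idx (dl p q) (dl q r)" unfolding col_def using c1 by simp
  moreover have "col p' q' r' div R = idx (dl p' q') (dl q' r')" unfolding col_def using c2 by simp
  ultimately have "idx (dl p q) (dl q r) = idx (dl p' q') (dl q' r')" using assms(7) by simp
  moreover have "dl p q \<noteq> dl q r" "dl p' q' \<noteq> dl q' r'" using dl_neq assms by blast+
  moreover have "dl p q \<le> L" "dl q r \<le> L" "dl p' q' \<le> L" "dl q' r' \<le> L" using dl_le assms by auto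
  ultimately show ?thesis using idx_inj by blast
qed

lemma col_neq: assumes "p < q" "q < r" "r < 2*n" "p' < q'" "q' < r'" "r' < 2*n"
  "dl p q \<noteq> dl p' q' \<or> dl q r \<noteq> dl q' r'" shows "col p q r \<noteq> col p' q' r'"
  using col_pat[OF assms(1-6)] assms(7) by blast

lemma cT_eq: assumes "p < q" "q < r" shows "cT {p,q,r} = col p q r"
proof -
  have "Min {p,q,r} = p" using assms by (simp add: min_def)
  moreover have "{p,q,r} - {p} = {q,r}" using assms by auto
  moreover have "Min {q,r} = q" using assms by (simp add: min_def)
  moreover have "Max {p,q,r} = r" using assms by (simp add: max_def)
  ultimately show ?thesis unfolding cT_def by simp
qed

end

context constr2 begin
lemma four: assumes "w < x" "x < y" "y < z" "z < 2*n"
  shows "3 \<le> card (cT ` {T. T \<subseteq> {w,x,y,z} \<and> card T = 3})"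
proof -
  let ?A = "{T. T \<subseteq> {w,x,y,z} \<and> card T = 3}"
  define c1 where "c1 = col w x y"
  define c2 where "c2 = col w x z"
  define c3 where "c3 = col w y z"
  define c4 where "c4 = col x y z"
  have fin: "finite (cT ` ?A)"
  proof -
    have "?A \<subseteq> Pow {w,x,y,z}" by auto
    then have "finite ?A" by (rule finite_subset) simp
    then show ?thesis by simp
  qed
  have k1: "card {w,x,y} = 3" "card {w,x,z} = 3" "card {w,y,z} = 3" "card {x,y,z} = 3"
    using assms by simp_all
  have m: "{w,x,y} \<in> ?A" "{w,x,z} \<in> ?A" "{w,y,z} \<in> ?A" "{x,y,z} \<in> ?A"
    using k1 by blast+
  have e: "c1 = cT {w,x,y}" "c2 = cT {w,x,z}" "c3 = cT {w,y,z}" "c4 = cT {x,y,z}"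
    unfolding c1_def c2_def c3_def c4_def using assms cT_eq by simp_all
  have "c1 \<in> cT ` ?A" "c2 \<in> cT ` ?A" "c3 \<in> cT ` ?A" "c4 \<in> cT ` ?A"
    using image_eqI[where f=cT, OF e(1) m(1)] image_eqI[where f=cT, OF e(2) m(2)]
      image_eqI[where f=cT, OF e(3) m(3)] image_eqI[where f=cT, OF e(4) m(4)]
    by simp_all
  then have sub: "{c1,c2,c3,c4} \<subseteq> cT ` ?A" by simp
  define d1 where "d1 = dl w x"
  define d2 where "d2 = dl x y"
  define d3 where "d3 = dl y z"
  have xz: "dl x z = max d2 d3" unfolding d2_def d3_def using dl_max assms by simp
  have wy: "dl w y = max d1 d2" unfolding d1_def d2_def using dl_max assms by simp
  have n12: "d1 \<noteq> d2" unfolding d1_def d2_def using dl_neq assms by simp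
  have n23: "d2 \<noteq> d3" unfolding d3_def d2_def using dl_neq assms by simp
  have L3: "d3 \<le> L" "d2 \<le> L" unfolding d3_def d2_def using dl_le assms by auto
  have v: "w < x" "x < y" "y < z" "z < 2*n" "w < y" "x < z" "y < 2*n" using assms by auto
  consider "d2 < d1" "d2 < d3" | "d2 < d1" "d3 < d2" | "d1 < d2" "d2 < d3" | "d1 < d2" "d3 < d2"
    using n12 n23 by (meson linorder_neqE_nat)
  then have "\<exists>a b c. a \<noteq> b \<and> a \<noteq> c \<and> b \<noteq> c \<and> {a,b,c} \<subseteq> {c1,c2,c3,c4}"
  proof cases
    case 1
    have "c1 \<noteq> c2" unfolding c1_def c2_def
      by (rule col_neq) (use v 1 xz in \<open>simp_all add: d1_def d2_def d3_def\<close>)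
    moreover have "c1 \<noteq> c4" unfolding c1_def c4_def
      by (rule col_neq) (use v 1 xz in \<open>simp_all add: d1_def d2_def d3_def\<close>)
    moreover have "c2 \<noteq> c4" unfolding c2_def c4_def
      by (rule col_neq) (use v 1 xz in \<open>simp_all add: d1_def d2_def d3_def\<close>)
    ultimately show ?thesis by blast
  next
    case 2
    have "c1 \<noteq> c3" unfolding c1_def c3_def
      by (rule col_neq) (use v 2 wy in \<open>simp_all add: d1_def d2_def d3_def\<close>)
    moreover have "c1 \<noteq> c4" unfolding c1_def c4_def
      by (rule col_neq) (use v 2 wy in \<open>simp_all add: d1_def d2_def d3_def\<close>)
    moreover have "c3 \<noteq> c4" unfolding c3_def c4_def
      by (rule col_neq) (use v 2 wy in \<open>simp_all add: d1_def d2_def d3_def\<close>)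
    ultimately show ?thesis by blast
  next
    case 3
    have "c1 \<noteq> c2" unfolding c1_def c2_def
      by (rule col_neq) (use v 3 xz in \<open>simp_all add: d1_def d2_def d3_def\<close>)
    moreover have "c1 \<noteq> c3" unfolding c1_def c3_def
      by (rule col_neq) (use v 3 wy in \<open>simp_all add: d1_def d2_def d3_def\<close>)
    moreover have "c2 \<noteq> c3" unfolding c2_def c3_def
      by (rule col_neq) (use v 3 xz wy in \<open>simp_all add: d1_def d2_def d3_def\<close>)
    ultimately show ?thesis by blast
  next
    case 4
    have a1: "c1 \<noteq> c3" unfolding c1_def c3_def
      by (rule col_neq) (use v 4 wy in \<open>simp_all add: d1_def d2_def d3_def\<close>)
    have a2: "c1 \<noteq> c4" unfolding c1_def c4_def
      by (rule col_neq) (use v 4 in \<open>simp_all add: d1_def d2_def d3_def\<close>)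
    have a3: "c2 \<noteq> c3" unfolding c2_def c3_def
      by (rule col_neq) (use v 4 xz wy in \<open>simp_all add: d1_def d2_def d3_def\<close>)
    have a4: "c2 \<noteq> c4" unfolding c2_def c4_def
      by (rule col_neq) (use v 4 xz in \<open>simp_all add: d1_def d2_def d3_def\<close>)
    note a = a1 a2 a3 a4
    have "c1 \<noteq> c2 \<or> c3 \<noteq> c4"
    proof (rule ccontr)
      assume "\<not> (c1 \<noteq> c2 \<or> c3 \<noteq> c4)"
      then have e: "c1 = c2" "c3 = c4" by auto
      have i1: "idx (dl w x) (dl x y) = idx (dl w x) (dl x z)" using xz 4 d2_def d3_def by simp
      have i2: "idx (dl w y) (dl y z) = idx (dl x y) (dl y z)" using wy 4 d1_def d2_def by simp
      have p1: "chipart w x y = chipart w x z" using e(1) i1 unfolding c1_def c2_def col_def by simp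
      have p2: "chipart w y z = chipart x y z" using e(2) i2 unfolding c3_def c4_def col_def by simp
      have q1: "\<chi> {(rho w, rho y),(rho x, rho y)} = \<chi> {(rho w, rho z),(rho x, rho z)}"
        using p1 4 xz unfolding chipart_def d1_def d2_def d3_def by simp
      have q2: "\<chi> {(rho w, rho y),(rho w, rho z)} = \<chi> {(rho x, rho y),(rho x, rho z)}"
        using p2 4 wy unfolding chipart_def d1_def d2_def d3_def by simp
      have r1: "rho w \<noteq> rho x" using rho_neq[of w x] v 4 L3 d1_def by simp
      have r2: "rho y \<noteq> rho z" using rho_neq[of y z] v 4 L3 d3_def by simp
      show False using no_alt[OF noalt rho_range rho_range rho_range rho_range r1 r2 q1 q2] .
    qed
    then show ?thesis using a by blast
  qed
  then obtain a b c where abc: "a \<noteq> b" "a \<noteq> c" "b \<noteq> c" "{a,b,c} \<subseteq> {c1,c2,c3,c4}" by blast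
  show ?thesis using three_le_card[OF abc(1-3) _ fin] abc(4) sub by blast
qed

lemma f3_wit:
  "(\<forall>T. T \<subseteq> {0..<2*n} \<and> card T = 3 \<longrightarrow> cT T < (L+1)*L*R) \<and>
   (\<forall>S. S \<subseteq> {0..<2*n} \<and> card S = 4 \<longrightarrow> card (cT ` {T. T \<subseteq> S \<and> card T = 3}) \<ge> 3)"
proof (intro conjI allI impI)
  fix T assume T: "T \<subseteq> {0..<2*n} \<and> card T = 3"
  then obtain p q r where "p < q" "q < r" "T = {p,q,r}" using sort3 by blast
  moreover then have "r < 2*n" using T by auto
  ultimately show "cT T < (L+1)*L*R" using cT_eq col_lt by simp
next
  fix S assume S: "S \<subseteq> {0..<2*n} \<and> card S = 4"
  then obtain w x y z where "w < x" "x < y" "y < z" "S = {w,x,y,z}" using sort4 by blast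
  moreover then have "z < 2*n" using S by auto
  ultimately show "3 \<le> card (cT ` {T. T \<subseteq> S \<and> card T = 3})" using four by simp
qed

end

lemma tri_cases:
  fixes a b c d :: nat
  assumes "a \<noteq> b" "a \<noteq> c" "a \<noteq> d" "b \<noteq> c" "b \<noteq> d" "c \<noteq> d"
    "T \<subseteq> {a,b,c,d}" "card T = 3"
  shows "T = {b,c,d} \<or> T = {a,c,d} \<or> T = {a,b,d} \<or> T = {a,b,c}"
proof -
  have fin: "finite T" using assms(8) by (metis card.infinite zero_neq_numeral)
  consider "a \<notin> T" | "b \<notin> T" | "c \<notin> T" | "d \<notin> T" | "{a,b,c,d} \<subseteq> T" by blast
  then show ?thesis
  proof cases
    case 1
    then have "T \<subseteq> {b,c,d}" using assms(7) by blast
    moreover have "card {b,c,d} = 3" using assms by simp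
    ultimately have "T = {b,c,d}" using card_subset_eq[of "{b,c,d}" T] assms(8) by simp
    then show ?thesis by simp
  next
    case 2
    then have "T \<subseteq> {a,c,d}" using assms(7) by blast
    moreover have "card {a,c,d} = 3" using assms by simp
    ultimately have "T = {a,c,d}" using card_subset_eq[of "{a,c,d}" T] assms(8) by simp
    then show ?thesis by simp
  next
    case 3
    then have "T \<subseteq> {a,b,d}" using assms(7) by blast
    moreover have "card {a,b,d} = 3" using assms by simp
    ultimately have "T = {a,b,d}" using card_subset_eq[of "{a,b,d}" T] assms(8) by simp
    then show ?thesis by simp
  next
    case 4
    then have "T \<subseteq> {a,b,c}" using assms(7) by blast
    moreover have "card {a,b,c} = 3" using assms by simp
    ultimately have "T = {a,b,c}" using card_subset_eq[of "{a,b,c}" T] assms(8) by simp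
    then show ?thesis by simp
  next
    case 5
    have "card {a,b,c,d} = 4" using assms by simp
    moreover have "card {a,b,c,d} \<le> card T" using card_mono[OF fin 5] .
    ultimately show ?thesis using assms(8) by simp
  qed
qed

lemma lower:
  fixes c :: "nat set \<Rightarrow> nat"
  assumes n1: "1 \<le> n"
    and cb: "\<forall>T. T \<subseteq> {0..<2*n} \<and> card T = 3 \<longrightarrow> c T < r"
    and c4: "\<forall>S. S \<subseteq> {0..<2*n} \<and> card S = 4 \<longrightarrow> card (c ` {T. T \<subseteq> S \<and> card T = 3}) \<ge> 3"
  shows "\<exists>\<chi>. (\<forall>e\<in>grid_edges n. \<chi> e < r) \<and> \<not> has_alt_rect n \<chi>"
proof -
  define \<chi> where "\<chi> e = c (\<Union>v\<in>e. {fst v - 1, n + snd v - 1})" for e :: "(nat \<times> nat) set"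
  have colc: "\<chi> {(i,j),(i',j)} = c {i-1, i'-1, n+j-1}" for i i' j
    unfolding \<chi>_def by (rule arg_cong[where f=c]) auto
  have rowc: "\<chi> {(i,j),(i,j')} = c {i-1, n+j-1, n+j'-1}" for i j j'
    unfolding \<chi>_def by (rule arg_cong[where f=c]) auto
  show ?thesis
  proof (intro exI conjI ballI)
    fix e assume "e \<in> grid_edges n"
    then obtain u v where e: "e = {u,v}" "u \<in> grid_vertices n" "v \<in> grid_vertices n" "u \<noteq> v"
      "fst u = fst v \<or> snd u = snd v"
      unfolding grid_edges_def by blast
    obtain i j i' j' where uv: "u = (i,j)" "v = (i',j')" by (cases u, cases v) auto
    have r: "1 \<le> i" "i \<le> n" "1 \<le> j" "j \<le> n" "1 \<le> i'" "i' \<le> n" "1 \<le> j'" "j' \<le> n"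
      using e(2,3) uv unfolding grid_vertices_def by auto
    show "\<chi> e < r"
    proof (cases "i = i'")
      case True
      then have "j \<noteq> j'" using e(4) uv by simp
      then have "i-1 \<noteq> n+j-1" "i-1 \<noteq> n+j'-1" "n+j-1 \<noteq> n+j'-1" using r by auto
      then have "card {i-1, n+j-1, n+j'-1} = 3" "{i-1, n+j-1, n+j'-1} \<subseteq> {0..<2*n}"
        using r by auto
      then show ?thesis using cb e(1) uv True rowc by simp
    next
      case False
      then have "j = j'" using e(5) uv by simp
      have "i-1 \<noteq> i'-1" "i-1 \<noteq> n+j-1" "i'-1 \<noteq> n+j-1" using r False by auto
      then have "card {i-1, i'-1, n+j-1} = 3" "{i-1, i'-1, n+j-1} \<subseteq> {0..<2*n}"
        using r False by auto
      then show ?thesis using cb e(1) uv \<open>j = j'\<close> colc by simp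
    qed
  next
    show "\<not> has_alt_rect n \<chi>"
    proof
      assume "has_alt_rect n \<chi>"
      then obtain i i' j j' where h: "1 \<le> i" "i < i'" "i' \<le> n" "1 \<le> j" "j < j'" "j' \<le> n"
        "\<chi> {(i,j),(i',j)} = \<chi> {(i,j'),(i',j')}" "\<chi> {(i,j),(i,j')} = \<chi> {(i',j),(i',j')}"
        unfolding has_alt_rect_def by blast
      define a where "a = i - 1"
      define a' where "a' = i' - 1"
      define b where "b = n + j - 1"
      define b' where "b' = n + j' - 1"
      have o: "a < a'" "a' < b" "b < b'" "b' < 2*n" unfolding a_def a'_def b_def b'_def using h by auto
      have q1: "c {a,a',b} = c {a,a',b'}" using h(7) colc unfolding a_def a'_def b_def b'_def by simp
      have q2: "c {a,b,b'} = c {a',b,b'}" using h(8) rowc unfolding a_def a'_def b_def b'_def by simp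
      let ?S = "{a,a',b,b'}"
      have "card ?S = 4" "?S \<subseteq> {0..<2*n}" using o by auto
      then have ge: "3 \<le> card (c ` {T. T \<subseteq> ?S \<and> card T = 3})" using c4 by blast
      have "c ` {T. T \<subseteq> ?S \<and> card T = 3} \<subseteq> {c {a,a',b}, c {a,b,b'}}"
      proof
        fix y assume "y \<in> c ` {T. T \<subseteq> ?S \<and> card T = 3}"
        then obtain T where T: "T \<subseteq> ?S" "card T = 3" "y = c T" by blast
        have "T = {a',b,b'} \<or> T = {a,b,b'} \<or> T = {a,a',b'} \<or> T = {a,a',b}"
          using tri_cases[OF _ _ _ _ _ _ T(1,2)] o by simp
        then show "y \<in> {c {a,a',b}, c {a,b,b'}}" using T(3) q1 q2 by auto
      qed
      moreover have "card {c {a,a',b}, c {a,b,b'}} \<le> 2" by (simp add: card_insert_le_m1)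
      ultimately have "card (c ` {T. T \<subseteq> ?S \<and> card T = 3}) \<le> 2"
        by (meson card_mono finite.emptyI finite.insertI le_trans)
      then show False using ge by simp
    qed
  qed
qed

lemma log_bound: fixes n :: nat assumes "1 \<le> n"
  shows "of_int \<lceil>log 2 (real n)\<rceil> = real (nat \<lceil>log 2 (real n)\<rceil>)"
    "n \<le> 2 ^ nat \<lceil>log 2 (real n)\<rceil>"
proof -
  define M where "M = nat \<lceil>log 2 (real n)\<rceil>"
  have l0: "0 \<le> log 2 (real n)" using assms by simp
  then show e: "of_int \<lceil>log 2 (real n)\<rceil> = real (nat \<lceil>log 2 (real n)\<rceil>)" by simp
  have "log 2 (real n) \<le> real M" using e le_of_int_ceiling unfolding M_def by metis
  then have "2 powr (log 2 (real n)) \<le> 2 powr real M"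
    by (rule powr_mono) simp
  moreover have "2 powr (log 2 (real n)) = real n" using assms by simp
  moreover have "(2::real) powr real M = 2 ^ M" by (simp add: powr_realpow)
  ultimately have "real n \<le> 2 ^ M" by simp
  then have "n \<le> 2 ^ M" by (metis of_nat_le_iff of_nat_numeral of_nat_power)
  then show "n \<le> 2 ^ nat \<lceil>log 2 (real n)\<rceil>" unfolding M_def .
qed

theorem proposition4p1:
  fixes n :: nat
  assumes "n \<ge> 1"
  shows "g n \<le> f3_43 (2 * n) \<and>
         real (f3_43 (2 * n)) \<le> 2 * (of_int \<lceil>log 2 (real n)\<rceil>)^2 * real (g n)"
proof -
  define L where "L = nat \<lceil>log 2 (real n)\<rceil>"
  have Lr: "of_int \<lceil>log 2 (real n)\<rceil> = real L" and nL: "n \<le> 2^L"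
    using log_bound[OF assms] unfolding L_def by auto
  have "\<exists>c. (\<forall>e\<in>grid_edges n. c e < g n) \<and> \<not> has_alt_rect n c"
    unfolding g_def by (rule LeastI_ex) (use g_exists in blast)
  then obtain \<chi> where chi: "\<forall>e\<in>grid_edges n. \<chi> e < g n" "\<not> has_alt_rect n \<chi>" by blast
  interpret constr2 n L "g n" \<chi>
    by unfold_locales (use assms nL chi in auto)
  have wit: "\<exists>c :: nat set \<Rightarrow> nat. (\<forall>T. T \<subseteq> {0..<2*n} \<and> card T = 3 \<longrightarrow> c T < (L+1)*L*g n) \<and>
      (\<forall>S. S \<subseteq> {0..<2*n} \<and> card S = 4 \<longrightarrow> card (c ` {T. T \<subseteq> S \<and> card T = 3}) \<ge> 3)"
    using f3_wit by blast
  have f3le: "f3_43 (2*n) \<le> (L+1)*L*g n"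
    unfolding f3_43_def by (rule Least_le) (rule wit)
  have "\<exists>c :: nat set \<Rightarrow> nat. (\<forall>T. T \<subseteq> {0..<2*n} \<and> card T = 3 \<longrightarrow> c T < f3_43 (2*n)) \<and>
      (\<forall>S. S \<subseteq> {0..<2*n} \<and> card S = 4 \<longrightarrow> card (c ` {T. T \<subseteq> S \<and> card T = 3}) \<ge> 3)"
    unfolding f3_43_def by (rule LeastI_ex) (use wit in blast)
  then obtain c' :: "nat set \<Rightarrow> nat" where
    c': "\<forall>T. T \<subseteq> {0..<2*n} \<and> card T = 3 \<longrightarrow> c' T < f3_43 (2*n)"
        "\<forall>S. S \<subseteq> {0..<2*n} \<and> card S = 4 \<longrightarrow> card (c' ` {T. T \<subseteq> S \<and> card T = 3}) \<ge> 3"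
    by blast
  have low: "g n \<le> f3_43 (2*n)"
    unfolding g_def by (rule Least_le) (rule lower[OF assms c'])
  have "real (f3_43 (2*n)) \<le> real ((L+1)*L*g n)" using f3le by (simp only: of_nat_le_iff)
  also have "\<dots> \<le> real (2 * L^2 * g n)"
  proof -
    have "(L+1)*L \<le> 2*L^2" by (simp add: power2_eq_square algebra_simps)
    then have "(L+1)*L*g n \<le> 2*L^2*g n" by (rule mult_le_mono1)
    then show ?thesis by (simp only: of_nat_le_iff)
  qed
  also have "\<dots> = 2 * (of_int \<lceil>log 2 (real n)\<rceil>)^2 * real (g n)" using Lr by simp
  finally show ?thesis using low by simp
qed

end
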